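(* Let $-1 \le a < b \le 1$, and set $\alpha = \arccos a$, $\beta = \arccos b$ (so $0 \le \beta < \alpha \le \pi$). Define $g:[0,\pi]\to\mathbb{R}$ by $g(\theta)=1$ for $\theta\in(\beta,\alpha)$, $g(\theta)=\tfrac12$ for $\theta\in\{\alpha,\beta\}$, and $g(\theta)=0$ for $\theta\in[0,\pi]\setminus[\beta,\alpha]$. Let \[ c_0=\frac{1}{\pi}(\alpha-\beta),\qquad c_j=\frac{2}{\pi}\cdot\frac{\sin(j\alpha)-\sin(j\beta)}{j}\quad (j\ge 1), \] and for $k\ge 1$ let $g_k(\theta)=\sum_{j=0}^k c_j\cos(j\theta)$. Then for every integer $k \ge 1$ and every $\theta\in[0,\pi]$, \[ |g(\theta)-g_k(\theta)|\le \frac{J(\theta)}{\pi(k+1)}, \] where \[ J(\theta)=\begin{cases} \frac{1}{|\sin\frac{\theta+\alpha}{2}|}+\frac{1}{|\sin\frac{\theta-\alpha}{2}|}+\frac{1}{|\sin\frac{\theta+\beta}{2}|}+\frac{1}{|\sin\frac{\theta-\beta}{2}|}, & \theta\ne\alpha,\beta,\\[4pt] \frac{1}{|\sin\alpha|}+\frac{1}{|\sin\frac{\alpha+\beta}{2}|}+\frac{1}{|\sin\frac{\alpha-\beta}{2}|}, & \theta=\alpha,\\[4pt] \frac{1}{|\sin\beta|}+\frac{1}{|\sin\frac{\alpha+\beta}{2}|}+\frac{1}{|\sin\frac{\alpha-\beta}{2}|}, & \theta=\beta. \end{cases} \]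
   Context: Any term of the form $1/0$ in $J(\theta)$ is interpreted as $+\infty$, in which case the bound holds trivially. The function $g$ is $s(\cos\theta)$ where $s$ is the step function equal to $1$ on $(a,b)$, $\tfrac12$ at $a,b$, and $0$ elsewhere on $[-1,1]$; $g_k$ is the $k$-th partial sum of its Fourier cosine series (equivalently, the degree-$k$ Chebyshev truncation of $s$). *)

theory Defs
  imports Complex_Main "HOL-Library.Extended_Real"
begin

definition inv_abs :: "real \<Rightarrow> ereal" where
  "inv_abs x = (if x = 0 then \<infinity> else ereal (1 / \<bar>x\<bar>))"

definition step_g :: "real \<Rightarrow> real \<Rightarrow> real \<Rightarrow> real" where
  "step_g \<alpha> \<beta> \<theta> =
     (if \<beta> < \<theta> \<and> \<theta> < \<alpha> then 1
      else if \<theta> = \<alpha> \<or> \<theta> = \<beta> then 1/2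
      else 0)"

definition cheb_coeff :: "real \<Rightarrow> real \<Rightarrow> nat \<Rightarrow> real" where
  "cheb_coeff \<alpha> \<beta> j =
     (if j = 0 then (\<alpha> - \<beta>) / pi
      else 2 / pi * ((sin (real j * \<alpha>) - sin (real j * \<beta>)) / real j))"

definition g_partial :: "real \<Rightarrow> real \<Rightarrow> nat \<Rightarrow> real \<Rightarrow> real" where
  "g_partial \<alpha> \<beta> k \<theta> = (\<Sum>j=0..k. cheb_coeff \<alpha> \<beta> j * cos (real j * \<theta>))"

definition J_bound :: "real \<Rightarrow> real \<Rightarrow> real \<Rightarrow> ereal" where
  "J_bound \<alpha> \<beta> \<theta> =
     (if \<theta> = \<alpha> then
        inv_abs (sin \<alpha>) + inv_abs (sin ((\<alpha> + \<beta>) / 2)) + inv_abs (sin ((\<alpha> - \<beta>) / 2))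
      else if \<theta> = \<beta> then
        inv_abs (sin \<beta>) + inv_abs (sin ((\<alpha> + \<beta>) / 2)) + inv_abs (sin ((\<alpha> - \<beta>) / 2))
      else
        inv_abs (sin ((\<theta> + \<alpha>) / 2)) + inv_abs (sin ((\<theta> - \<alpha>) / 2))
        + inv_abs (sin ((\<theta> + \<beta>) / 2)) + inv_abs (sin ((\<theta> - \<beta>) / 2)))"

end

theory Submission
  imports Defs
begin

lemma sin_diff_prod: "sin (a + b) - sin (a - b) = 2 * cos a * sin (b::real)"
  by (simp add: sin_add sin_diff)

lemma cos_diff_prod: "cos (a - b) - cos (a + b) = 2 * sin a * sin (b::real)"
  by (simp add: cos_add cos_diff)

lemma dirichlet:
  "2 * sin (x/2) * (1/2 + (\<Sum>j=1..n. cos (real j * x))) = sin ((real n + 1/2) * x)"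
proof (induction n)
  case 0 then show ?case by (simp add: mult.commute)
next
  case (Suc n)
  have e: "sin ((real (Suc n) + 1/2) * x) - sin ((real n + 1/2) * x) = 2 * cos (real (Suc n) * x) * sin (x/2)"
    using sin_diff_prod[of "real (Suc n) * x" "x/2"]
    by (simp add: algebra_simps)
  have "2 * sin (x/2) * (1/2 + (\<Sum>j=1..Suc n. cos (real j * x)))
      = 2 * sin (x/2) * (1/2 + (\<Sum>j=1..n. cos (real j * x))) + 2 * sin (x/2) * cos (real (Suc n) * x)"
    by (simp add: algebra_simps)
  also have "\<dots> = sin ((real (Suc n) + 1/2) * x)" using Suc e by (simp add: algebra_simps)
  finally show ?case .
qed

lemma sine_partial:
  assumes "m \<le> n"
  shows "2 * sin (x/2) * (\<Sum>j=m..n. sin (real j * x)) = cos ((real m - 1/2) * x) - cos ((real n + 1/2) * x)"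
  using assms
proof (induction n rule: dec_induct)
  case base
  then show ?case using cos_diff_prod[of "real m * x" "x/2"] by (simp add: algebra_simps)
next
  case (step n)
  have e: "cos ((real n + 1/2) * x) - cos ((real (Suc n) + 1/2) * x) = 2 * sin (real (Suc n) * x) * sin (x/2)"
    using cos_diff_prod[of "real (Suc n) * x" "x/2"]
    by (simp add: algebra_simps)
  have "2 * sin (x/2) * (\<Sum>j=m..Suc n. sin (real j * x))
      = 2 * sin (x/2) * (\<Sum>j=m..n. sin (real j * x)) + 2 * sin (x/2) * sin (real (Suc n) * x)"
    using step.hyps by (simp add: algebra_simps)
  also have "\<dots> = cos ((real m - 1/2) * x) - cos ((real (Suc n) + 1/2) * x)" using step e by (simp add: algebra_simps)
  finally show ?case .
qed

lemma sine_partial_bound: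
  assumes "sin (x/2) \<noteq> 0"
  shows "\<bar>\<Sum>j=m..n. sin (real j * x)\<bar> \<le> 1 / \<bar>sin (x/2)\<bar>"
proof (cases "m \<le> n")
  case False then show ?thesis by simp
next
  case True
  have "\<bar>2 * sin (x/2) * (\<Sum>j=m..n. sin (real j * x))\<bar> \<le> 2"
    unfolding sine_partial[OF True]
    using abs_triangle_ineq4[of "cos ((real m - 1/2) * x)" "cos ((real n + 1/2) * x)"]
      abs_cos_le_one[of "(real m - 1/2) * x"] abs_cos_le_one[of "(real n + 1/2) * x"] by linarith
  then have "\<bar>sin (x/2)\<bar> * \<bar>\<Sum>j=m..n. sin (real j * x)\<bar> \<le> 1" by (simp add: abs_mult)
  then show ?thesis using assms by (simp add: field_simps)
qed

lemma abel_ineq: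
  fixes a b :: "nat \<Rightarrow> real"
  assumes dec: "\<And>j. m \<le> j \<Longrightarrow> b (Suc j) \<le> b j" and nn: "\<And>j. m \<le> j \<Longrightarrow> 0 \<le> b j"
    and bnd: "\<And>n. \<bar>\<Sum>j=m..n. a j\<bar> \<le> M"
  shows "\<bar>\<Sum>j=m..n. a j * b j\<bar> \<le> M * b m"
proof (cases "m \<le> n")
  case False
  have "0 \<le> M" using bnd[of 0] by linarith
  then show ?thesis using False nn[of m] by simp
next
  case True
  have decm: "b n \<le> b m" if "m \<le> n" for n using that
    by (induction n rule: dec_induct) (auto intro: order_trans[OF dec])
  have inv: "\<bar>(\<Sum>j=m..n. a j * b j) - (\<Sum>j=m..n. a j) * b n\<bar> \<le> M * (b m - b n)"
    using True
  proof (induction n rule: dec_induct)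
    case base then show ?case by simp
  next
    case (step n)
    have eq: "(\<Sum>j=m..Suc n. a j * b j) - (\<Sum>j=m..Suc n. a j) * b (Suc n)
      = ((\<Sum>j=m..n. a j * b j) - (\<Sum>j=m..n. a j) * b n) + (\<Sum>j=m..n. a j) * (b n - b (Suc n))"
      using step.hyps by (simp add: algebra_simps)
    have "\<bar>(\<Sum>j=m..n. a j) * (b n - b (Suc n))\<bar> \<le> M * (b n - b (Suc n))"
      using bnd[of n] dec[OF step.hyps(1)] by (simp add: abs_mult mult_right_mono)
    then show ?case unfolding eq using step.IH by (simp add: algebra_simps)
  qed
  have "\<bar>(\<Sum>j=m..n. a j) * b n\<bar> \<le> M * b n"
    using bnd[of n] nn[OF True] by (simp add: abs_mult mult_right_mono)
  then show ?thesis using inv by (simp add: algebra_simps)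
qed


definition Fs :: "nat \<Rightarrow> real \<Rightarrow> real" where
  "Fs n x = (\<Sum>j=1..n. sin (real j * x) / real j)"

lemma Fs_deriv: "(Fs n has_real_derivative (\<Sum>j=1..n. cos (real j * t))) (at t)"
  unfolding Fs_def
  by (rule derivative_eq_intros | simp)+

lemma U_deriv:
  fixes N \<sigma> t :: real
  assumes N: "N = real n + 1/2" and s: "sin (t/2) \<noteq> 0"
  shows "((\<lambda>t. Fs n t + t/2 - pi/2 + (cos (N*t) + \<sigma>) / (2*N*sin(t/2))) has_real_derivative
     - (cos (N*t) + \<sigma>) * cos (t/2) / (4*N*sin(t/2)^2)) (at t)"
proof -
  have Npos: "N > 0" using N by simp
  have D: "(\<Sum>j=1..n. cos (real j * t)) = sin (N*t) / (2*sin(t/2)) - 1/2"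
    using dirichlet[of t n] s unfolding N by (simp add: field_simps)
  show ?thesis
    apply (rule derivative_eq_intros Fs_deriv refl | (use Npos s in simp; fail))+
    apply (subst D)
    using Npos s apply (simp add: field_simps power2_eq_square)
    done
qed


lemma Fs_pi: "Fs n pi = 0"
  unfolding Fs_def by (simp add: sin_npi)

lemma Fs_bound_half:
  assumes x: "0 < x" "x \<le> pi"
  shows "\<bar>Fs n x - (pi - x)/2\<bar> \<le> 1 / ((real n + 1/2) * sin (x/2))"
proof -
  define N where "N = real n + 1/2"
  have Npos: "N > 0" unfolding N_def by simp
  define U where "U = (\<lambda>\<sigma> t. Fs n t + t/2 - pi/2 + (cos (N*t) + \<sigma>) / (2*N*sin(t/2)))"
  have spos: "sin (t/2) > 0" if "x \<le> t" "t \<le> pi" for t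
    using that x by (intro sin_gt_zero) auto
  have cpos: "cos (t/2) \<ge> 0" if "x \<le> t" "t \<le> pi" for t
    using that x by (intro cos_ge_zero) auto
  have cNpi: "cos (N * pi) = 0"
  proof -
    have "N * pi = real n * pi + pi/2" unfolding N_def by (simp add: algebra_simps)
    then show ?thesis by (simp add: cos_add sin_npi)
  qed
  have Upi: "U \<sigma> pi = \<sigma> / (2*N)" for \<sigma>
    unfolding U_def by (simp add: Fs_pi cNpi)
  have dec: "U 1 pi \<le> U 1 x"
  proof (rule DERIV_nonpos_imp_nonincreasing[OF x(2)])
    fix t assume t: "x \<le> t" "t \<le> pi"
    show "\<exists>y. DERIV (U 1) t :> y \<and> y \<le> 0"
    proof (intro exI conjI)
      show "DERIV (U 1) t :> - (cos (N*t) + 1) * cos (t/2) / (4*N*sin(t/2)^2)"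
        unfolding U_def using U_deriv[OF N_def, of t 1] spos[OF t] by simp
      have "0 \<le> (cos (N*t) + 1) * cos (t/2)"
        using cpos[OF t] cos_ge_minus_one[of "N*t"] by (intro mult_nonneg_nonneg; linarith)
      moreover have "0 < 4*N*sin(t/2)^2" using Npos spos[OF t] by simp
      ultimately have "0 \<le> (cos (N*t) + 1) * cos (t/2) / (4*N*sin(t/2)^2)"
        by (rule divide_nonneg_pos)
      moreover have "- (cos (N*t) + 1) * cos (t/2) / (4*N*sin(t/2)^2) = - ((cos (N*t) + 1) * cos (t/2) / (4*N*sin(t/2)^2))"
        by (simp only: minus_divide_left mult_minus_left)
      ultimately show "- (cos (N*t) + 1) * cos (t/2) / (4*N*sin(t/2)^2) \<le> 0"
        by linarith
    qed
  qed
  have inc: "U (-1) x \<le> U (-1) pi"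
  proof (rule DERIV_nonneg_imp_nondecreasing[OF x(2)])
    fix t assume t: "x \<le> t" "t \<le> pi"
    show "\<exists>y. DERIV (U (-1)) t :> y \<and> y \<ge> 0"
    proof (intro exI conjI)
      show "DERIV (U (-1)) t :> - (cos (N*t) + -1) * cos (t/2) / (4*N*sin(t/2)^2)"
        unfolding U_def using U_deriv[OF N_def, of t "-1"] spos[OF t] by simp
      have "0 \<le> (1 - cos (N*t)) * cos (t/2)"
        using cpos[OF t] cos_le_one[of "N*t"] by (intro mult_nonneg_nonneg; linarith)
      moreover have "0 < 4*N*sin(t/2)^2" using Npos spos[OF t] by simp
      ultimately have "0 \<le> (1 - cos (N*t)) * cos (t/2) / (4*N*sin(t/2)^2)"
        by (rule divide_nonneg_pos)
      moreover have "- (cos (N*t) + -1) * cos (t/2) / (4*N*sin(t/2)^2) = (1 - cos (N*t)) * cos (t/2) / (4*N*sin(t/2)^2)"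
        by (simp add: algebra_simps)
      ultimately show "- (cos (N*t) + -1) * cos (t/2) / (4*N*sin(t/2)^2) \<ge> 0"
        by linarith
    qed
  qed
  have sx: "sin (x/2) > 0" using spos[of x] x by simp
  define G where "G = Fs n x + x/2 - pi/2"
  define c where "c = cos (N*x)"
  have c1: "\<bar>c\<bar> \<le> 1" unfolding c_def by simp
  have h1: "1/(2*N) \<le> G + (c + 1)/(2*N*sin(x/2))"
    using dec unfolding Upi unfolding U_def G_def c_def by simp
  have h2: "G + (c - 1)/(2*N*sin(x/2)) \<le> -1/(2*N)"
    using inc unfolding Upi unfolding U_def G_def c_def by simp
  have a1: "(c + 1)/(2*N*sin(x/2)) \<le> 1/(N*sin(x/2))"
    using c1 Npos sx by (simp add: field_simps)
  have a2: "(1 - c)/(2*N*sin(x/2)) \<le> 1/(N*sin(x/2))"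
  proof -
    have "(1 - c)/(2*N*sin(x/2)) \<le> 2/(2*N*sin(x/2))"
      using c1 Npos sx by (intro divide_right_mono) auto
    then show ?thesis by simp
  qed
  have a3: "(c - 1)/(2*N*sin(x/2)) = - ((1 - c)/(2*N*sin(x/2)))"
    by (metis minus_diff_eq minus_divide_left)
  have "0 < 1/(2*N)" using Npos by simp
  then have "\<bar>G\<bar> \<le> 1/(N*sin(x/2))" using h1 h2 a1 a2 a3 by linarith
  moreover have "Fs n x - (pi - x)/2 = G" unfolding G_def by (simp add: field_simps)
  ultimately show ?thesis unfolding N_def by simp
qed


lemma Fs_reflect: "Fs n (2*pi - x) = - Fs n x"
proof -
  have "sin (real j * (2*pi - x)) = - sin (real j * x)" for j
  proof -
    have "real j * (2*pi - x) = 2 * real j * pi - real j * x" by (simp add: algebra_simps)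
    then show ?thesis by (simp add: sin_diff)
  qed
  then show ?thesis unfolding Fs_def by (simp add: sum_negf)
qed

lemma Fs_neg: "Fs n (-x) = - Fs n x"
  unfolding Fs_def by (simp add: sum_negf)

definition sw :: "real \<Rightarrow> real" where
  "sw x = (if x = 0 then 0 else if 0 < x then (pi - x)/2 else -(pi + x)/2)"

lemma Fs_tendsto_pos1:
  assumes "0 < x" "x \<le> pi"
  shows "(\<lambda>n. Fs n x) \<longlonglongrightarrow> (pi - x)/2"
proof -
  have sx: "sin (x/2) > 0" using assms by (intro sin_gt_zero) auto
  have "(\<lambda>n. 1 / ((real n + 1/2) * sin (x/2))) \<longlonglongrightarrow> 0"
  proof -
    have "(\<lambda>n. inverse (real n + 1/2)) \<longlonglongrightarrow> 0"
      by (intro tendsto_inverse_0_at_top filterlim_at_top_mono[OF filterlim_real_sequentially]) auto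
    then have "(\<lambda>n. inverse (real n + 1/2) * (1 / sin (x/2))) \<longlonglongrightarrow> 0 * (1 / sin (x/2))"
      by (intro tendsto_mult tendsto_const)
    then show ?thesis by (simp add: field_simps)
  qed
  note up = this
  have "(\<lambda>n. Fs n x - (pi - x)/2) \<longlonglongrightarrow> 0"
  proof (rule tendsto_sandwich[where f="\<lambda>n. - (1 / ((real n + 1/2) * sin (x/2)))" and h="\<lambda>n. 1 / ((real n + 1/2) * sin (x/2))"])
    show "(\<lambda>n. 1 / ((real n + 1/2) * sin (x/2))) \<longlonglongrightarrow> 0" by (rule up)
    show "\<forall>\<^sub>F n in sequentially. Fs n x - (pi - x)/2 \<le> 1 / ((real n + 1/2) * sin (x/2))"
      using Fs_bound_half[OF assms] by (auto simp: abs_le_iff)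
    have "(\<lambda>n. - (1 / ((real n + 1/2) * sin (x/2)))) \<longlonglongrightarrow> - 0"
      by (intro tendsto_minus) fact
    then show "(\<lambda>n. - (1 / ((real n + 1/2) * sin (x/2)))) \<longlonglongrightarrow> 0" by simp
    show "\<forall>\<^sub>F n in sequentially. - (1 / ((real n + 1/2) * sin (x/2))) \<le> Fs n x - (pi - x)/2"
    proof (intro always_eventually allI)
      fix n
      show "- (1 / ((real n + 1/2) * sin (x/2))) \<le> Fs n x - (pi - x)/2"
        using abs_le_D2[OF Fs_bound_half[OF assms, of n]] by linarith
    qed
  qed
  then show ?thesis by (simp add: LIM_zero_iff)
qed

lemma Fs_tendsto_pos:
  assumes "0 < x" "x < 2*pi"
  shows "(\<lambda>n. Fs n x) \<longlonglongrightarrow> (pi - x)/2"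
proof (cases "x \<le> pi")
  case True then show ?thesis using Fs_tendsto_pos1 assms by simp
next
  case False
  have "(\<lambda>n. Fs n (2*pi - x)) \<longlonglongrightarrow> (pi - (2*pi - x))/2"
    using False assms by (intro Fs_tendsto_pos1) auto
  then have L: "(\<lambda>n. - Fs n (2*pi - x)) \<longlonglongrightarrow> - ((pi - (2*pi - x))/2)"
    by (rule tendsto_minus)
  have eq: "- ((pi - (2*pi - x))/2) = (pi - x)/2" by (simp add: field_simps)
  show ?thesis using L unfolding eq Fs_reflect minus_minus .
qed

lemma Fs_tendsto:
  assumes "\<bar>x\<bar> < 2*pi"
  shows "(\<lambda>n. Fs n x) \<longlonglongrightarrow> sw x"
proof -
  consider "x = 0" | "0 < x" | "x < 0" by linarith
  then show ?thesis
  proof cases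
    case 1 then show ?thesis by (simp add: sw_def Fs_def)
  next
    case 2 then show ?thesis using Fs_tendsto_pos assms by (simp add: sw_def)
  next
    case 3
    have "(\<lambda>n. Fs n (-x)) \<longlonglongrightarrow> (pi - (-x))/2"
      using 3 assms by (intro Fs_tendsto_pos) auto
    then have "(\<lambda>n. - Fs n (-x)) \<longlonglongrightarrow> - ((pi - (-x))/2)"
      by (intro tendsto_minus)
    moreover have "sw x = - ((pi + x)/2)" using 3 unfolding sw_def by (simp add: field_simps)
    ultimately show ?thesis by (simp add: Fs_neg)
  qed
qed

lemma Fs_diff_bound:
  assumes s: "sin (x/2) \<noteq> 0" and kn: "k \<le> n"
  shows "\<bar>Fs n x - Fs k x\<bar> \<le> 1 / ((real k + 1) * \<bar>sin (x/2)\<bar>)"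
proof -
  obtain p where p: "n = k + p" using kn le_Suc_ex by blast
  have "Fs n x = Fs k x + (\<Sum>j=k+1..k+p. sin (real j * x) / real j)"
    unfolding Fs_def p by (rule sum.ub_add_nat) simp
  then have "Fs n x - Fs k x = (\<Sum>j=Suc k..n. sin (real j * x) * (1 / real j))" using p by simp
  also have "\<bar>\<dots>\<bar> \<le> (1 / \<bar>sin (x/2)\<bar>) * (1 / real (Suc k))"
  proof (rule abel_ineq[where a="\<lambda>j. sin (real j * x)" and b="\<lambda>j. 1 / real j"])
    fix j assume "Suc k \<le> j"
    then show "1 / real (Suc j) \<le> 1 / real j"
      by (intro divide_left_mono) auto
  next
    fix j show "0 \<le> 1 / real j" by simp
  next
    fix n show "\<bar>\<Sum>j = Suc k..n. sin (real j * x)\<bar> \<le> 1 / \<bar>sin (x / 2)\<bar>"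
      by (rule sine_partial_bound[OF s])
  qed
  finally show ?thesis by (simp add: field_simps)
qed

lemma tail_bound:
  assumes s: "sin (x/2) \<noteq> 0" and x: "\<bar>x\<bar> < 2*pi"
  shows "\<bar>sw x - Fs k x\<bar> \<le> 1 / ((real k + 1) * \<bar>sin (x/2)\<bar>)"
proof -
  have "(\<lambda>n. \<bar>Fs n x - Fs k x\<bar>) \<longlonglongrightarrow> \<bar>sw x - Fs k x\<bar>"
    by (intro tendsto_rabs tendsto_diff Fs_tendsto x tendsto_const)
  then show ?thesis
    by (rule LIMSEQ_le_const2) (use Fs_diff_bound[OF s] in auto)
qed


lemma g_expand:
  assumes "0 \<le> \<beta>" "\<beta> < \<alpha>" "\<alpha> \<le> pi" "0 \<le> \<theta>" "\<theta> \<le> pi"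
    "\<theta> = \<beta> \<Longrightarrow> 0 < \<beta>" "\<theta> = \<alpha> \<Longrightarrow> \<alpha> < pi"
  shows "step_g \<alpha> \<beta> \<theta> = (\<alpha> - \<beta>)/pi + (sw (\<alpha>+\<theta>) + sw (\<alpha>-\<theta>) - sw (\<beta>+\<theta>) - sw (\<beta>-\<theta>))/pi"
proof -
  have pi: "pi > 0" by simp
  consider "\<theta> < \<beta>" | "\<theta> = \<beta>" | "\<beta> < \<theta> \<and> \<theta> < \<alpha>" | "\<theta> = \<alpha>" | "\<alpha> < \<theta>" by linarith
  then show ?thesis
  proof cases
    case 1
    then have "sw (\<alpha>+\<theta>) = (pi - \<alpha> - \<theta>)/2" "sw (\<alpha>-\<theta>) = (pi - \<alpha> + \<theta>)/2"
      "sw (\<beta>+\<theta>) = (pi - \<beta> - \<theta>)/2" "sw (\<beta>-\<theta>) = (pi - \<beta> + \<theta>)/2"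
      using assms by (auto simp: sw_def)
    note eqs = this
    show ?thesis unfolding eqs using 1 assms pi by (simp add: step_g_def field_simps)
  next
    case 2
    then have "sw (\<alpha>+\<theta>) = (pi - \<alpha> - \<theta>)/2" "sw (\<alpha>-\<theta>) = (pi - \<alpha> + \<theta>)/2"
      "sw (\<beta>+\<theta>) = (pi - \<beta> - \<theta>)/2" "sw (\<beta>-\<theta>) = 0"
      using assms by (auto simp: sw_def)
    note eqs = this
    show ?thesis unfolding eqs using 2 assms pi by (simp add: step_g_def field_simps)
  next
    case 3
    then have "sw (\<alpha>+\<theta>) = (pi - \<alpha> - \<theta>)/2" "sw (\<alpha>-\<theta>) = (pi - \<alpha> + \<theta>)/2"
      "sw (\<beta>+\<theta>) = (pi - \<beta> - \<theta>)/2" "sw (\<beta>-\<theta>) = -(pi + \<beta> - \<theta>)/2"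
      using assms by (auto simp: sw_def)
    note eqs = this
    show ?thesis unfolding eqs using 3 assms pi by (simp add: step_g_def field_simps)
  next
    case 4
    then have "sw (\<alpha>+\<theta>) = (pi - \<alpha> - \<theta>)/2" "sw (\<alpha>-\<theta>) = 0"
      "sw (\<beta>+\<theta>) = (pi - \<beta> - \<theta>)/2" "sw (\<beta>-\<theta>) = -(pi + \<beta> - \<theta>)/2"
      using assms by (auto simp: sw_def)
    note eqs = this
    show ?thesis unfolding eqs using 4 assms pi by (simp add: step_g_def field_simps)
  next
    case 5
    then have "sw (\<alpha>+\<theta>) = (pi - \<alpha> - \<theta>)/2" "sw (\<alpha>-\<theta>) = -(pi + \<alpha> - \<theta>)/2"
      "sw (\<beta>+\<theta>) = (pi - \<beta> - \<theta>)/2" "sw (\<beta>-\<theta>) = -(pi + \<beta> - \<theta>)/2"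
      using assms by (auto simp: sw_def)
    note eqs = this
    show ?thesis unfolding eqs using 5 assms pi by (simp add: step_g_def field_simps)
  qed
qed

lemma gk_expand:
  "g_partial \<alpha> \<beta> k \<theta> = (\<alpha> - \<beta>)/pi + (Fs k (\<alpha>+\<theta>) + Fs k (\<alpha>-\<theta>) - Fs k (\<beta>+\<theta>) - Fs k (\<beta>-\<theta>))/pi"
proof -
  have t: "cheb_coeff \<alpha> \<beta> j * cos (real j * \<theta>) =
     (sin (real j * (\<alpha>+\<theta>)) / real j + sin (real j * (\<alpha>-\<theta>)) / real j
      - sin (real j * (\<beta>+\<theta>)) / real j - sin (real j * (\<beta>-\<theta>)) / real j) / pi"
    if "j \<in> {1..k}" for j
  proof -
    have j: "j \<noteq> 0" using that by auto
    have e: "2 * sin (u) * cos (v) = sin (u + v) + sin (u - v)" for u v :: real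
      by (simp add: sin_add sin_diff)
    have "cheb_coeff \<alpha> \<beta> j * cos (real j * \<theta>) =
       (2 * sin (real j * \<alpha>) * cos (real j * \<theta>) - 2 * sin (real j * \<beta>) * cos (real j * \<theta>)) / (pi * real j)"
      using j by (simp add: cheb_coeff_def field_simps)
    also have "\<dots> = (sin (real j * (\<alpha>+\<theta>)) + sin (real j * (\<alpha>-\<theta>))
      - sin (real j * (\<beta>+\<theta>)) - sin (real j * (\<beta>-\<theta>))) / (pi * real j)"
      unfolding e by (simp add: algebra_simps)
    also have "\<dots> = (sin (real j * (\<alpha>+\<theta>)) / real j + sin (real j * (\<alpha>-\<theta>)) / real j
      - sin (real j * (\<beta>+\<theta>)) / real j - sin (real j * (\<beta>-\<theta>)) / real j) / pi"
      by (simp only: add_divide_distrib diff_divide_distrib divide_divide_eq_left mult.commute)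
    finally show ?thesis .
  qed
  have "g_partial \<alpha> \<beta> k \<theta> = cheb_coeff \<alpha> \<beta> 0 * cos (real 0 * \<theta>) + (\<Sum>j=1..k. cheb_coeff \<alpha> \<beta> j * cos (real j * \<theta>))"
    unfolding g_partial_def by (subst sum.atLeast_Suc_atMost) auto
  also have "(\<Sum>j=1..k. cheb_coeff \<alpha> \<beta> j * cos (real j * \<theta>)) =
     (\<Sum>j=1..k. (sin (real j * (\<alpha>+\<theta>)) / real j + sin (real j * (\<alpha>-\<theta>)) / real j
      - sin (real j * (\<beta>+\<theta>)) / real j - sin (real j * (\<beta>-\<theta>)) / real j) / pi)"
    by (rule sum.cong) (auto simp: t)
  also have "\<dots> = (Fs k (\<alpha>+\<theta>) + Fs k (\<alpha>-\<theta>) - Fs k (\<beta>+\<theta>) - Fs k (\<beta>-\<theta>))/pi"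
    unfolding Fs_def by (simp add: sum_divide_distrib[symmetric] sum.distrib sum_subtractf)
  finally show ?thesis by (simp add: cheb_coeff_def)
qed


lemma ereal_bound3:
  assumes p: "p > 0" and h: "x \<noteq> 0 \<Longrightarrow> y \<noteq> 0 \<Longrightarrow> z \<noteq> 0 \<Longrightarrow> r \<le> (1/\<bar>x\<bar> + 1/\<bar>y\<bar> + 1/\<bar>z\<bar>)/p"
  shows "ereal r \<le> (inv_abs x + inv_abs y + inv_abs z) / ereal p"
proof (cases "x \<noteq> 0 \<and> y \<noteq> 0 \<and> z \<noteq> 0")
  case True
  then show ?thesis using h p by (simp add: inv_abs_def)
next
  case False
  then show ?thesis using p by (auto simp: inv_abs_def)
qed

lemma ereal_bound4:
  assumes p: "p > 0" and h: "x \<noteq> 0 \<Longrightarrow> y \<noteq> 0 \<Longrightarrow> z \<noteq> 0 \<Longrightarrow> w \<noteq> 0 \<Longrightarrow> r \<le> (1/\<bar>x\<bar> + 1/\<bar>y\<bar> + 1/\<bar>z\<bar> + 1/\<bar>w\<bar>)/p"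
  shows "ereal r \<le> (inv_abs x + inv_abs y + inv_abs z + inv_abs w) / ereal p"
proof (cases "x \<noteq> 0 \<and> y \<noteq> 0 \<and> z \<noteq> 0 \<and> w \<noteq> 0")
  case True
  then show ?thesis using h p by (simp add: inv_abs_def)
next
  case False
  then show ?thesis using p by (auto simp: inv_abs_def)
qed

lemma arith4:
  fixes e1 e2 e3 e4 A B C D K :: real
  assumes "\<bar>e1\<bar> \<le> A/K" "\<bar>e2\<bar> \<le> B/K" "\<bar>e3\<bar> \<le> C/K" "\<bar>e4\<bar> \<le> D/K" "K > 0"
  shows "\<bar>(e1 + e2 - e3 - e4)/pi\<bar> \<le> (A + B + C + D)/(pi*K)"
proof -
  have "\<bar>e1 + e2 - e3 - e4\<bar> \<le> A/K + B/K + C/K + D/K" using assms(1-4) by arith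
  also have "\<dots> = (A + B + C + D)/K" by (simp add: add_divide_distrib)
  finally have "\<bar>e1 + e2 - e3 - e4\<bar> / pi \<le> (A + B + C + D)/K/pi"
    by (intro divide_right_mono) auto
  then show ?thesis by (simp add: abs_divide mult.commute)
qed

lemma sw_neg: "sw (-x) = - sw x"
  unfolding sw_def by (auto simp: field_simps)


theorem theorem3p2:
  fixes a b \<theta> :: real and k :: nat
  assumes "-1 \<le> a" and "a < b" and "b \<le> 1"
    and "k \<ge> 1"
    and "0 \<le> \<theta>" and "\<theta> \<le> pi"
  shows "ereal \<bar>step_g (arccos a) (arccos b) \<theta> - g_partial (arccos a) (arccos b) k \<theta>\<bar>
           \<le> J_bound (arccos a) (arccos b) \<theta> / ereal (pi * (real k + 1))"
proof -
  define \<alpha> where "\<alpha> = arccos a"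
  define \<beta> where "\<beta> = arccos b"
  have b0: "0 \<le> \<beta>" unfolding \<beta>_def using assms by (intro arccos_lbound) auto
  have api: "\<alpha> \<le> pi" unfolding \<alpha>_def using assms by (intro arccos_ubound) auto
  have ba: "\<beta> < \<alpha>" unfolding \<alpha>_def \<beta>_def using assms by (intro arccos_less_arccos) auto
  have t0: "0 \<le> \<theta>" and tpi: "\<theta> \<le> pi" using assms by auto
  define K where "K = real k + 1"
  have K: "K > 0" unfolding K_def by simp
  have pK: "pi * (real k + 1) = pi * K" unfolding K_def ..
  have pKpos: "pi * (real k + 1) > 0" by simp
  define E where "E x = sw x - Fs k x" for x
  have Eodd: "E (-x) = - E x" for x unfolding E_def by (simp add: sw_neg Fs_neg)
  have E0: "E 0 = 0" unfolding E_def by (simp add: sw_def Fs_def)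
  have Eb: "\<bar>E x\<bar> \<le> (1/\<bar>sin (y/2)\<bar>)/K" if "sin (y/2) \<noteq> 0" "\<bar>y\<bar> < 2*pi" "x = y \<or> x = -y" for x y
  proof -
    have "\<bar>E y\<bar> \<le> (1/\<bar>sin (y/2)\<bar>)/K"
      using tail_bound[OF that(1,2), of k] unfolding E_def K_def by (simp add: field_simps)
    moreover have "\<bar>E x\<bar> = \<bar>E y\<bar>" using that(3) Eodd by auto
    ultimately show ?thesis by simp
  qed
  have diff: "step_g \<alpha> \<beta> \<theta> - g_partial \<alpha> \<beta> k \<theta> = (E (\<alpha>+\<theta>) + E (\<alpha>-\<theta>) - E (\<beta>+\<theta>) - E (\<beta>-\<theta>))/pi"
    if "\<theta> = \<beta> \<Longrightarrow> 0 < \<beta>" "\<theta> = \<alpha> \<Longrightarrow> \<alpha> < pi"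
  proof -
    have g1: "step_g \<alpha> \<beta> \<theta> = (\<alpha> - \<beta>)/pi + (sw (\<alpha>+\<theta>) + sw (\<alpha>-\<theta>) - sw (\<beta>+\<theta>) - sw (\<beta>-\<theta>))/pi"
      by (rule g_expand[OF b0 ba api t0 tpi that])
    show ?thesis unfolding g1 gk_expand E_def by (simp add: field_simps)
  qed
  have sinpi: "sin pi = 0" by simp
  consider "\<theta> = \<alpha>" | "\<theta> = \<beta>" | "\<theta> \<noteq> \<alpha> \<and> \<theta> \<noteq> \<beta>" by blast
  then have "ereal \<bar>step_g \<alpha> \<beta> \<theta> - g_partial \<alpha> \<beta> k \<theta>\<bar> \<le> J_bound \<alpha> \<beta> \<theta> / ereal (pi * (real k + 1))"
  proof cases
    case 1
    have J: "J_bound \<alpha> \<beta> \<theta> = inv_abs (sin \<alpha>) + inv_abs (sin ((\<alpha> + \<beta>) / 2)) + inv_abs (sin ((\<alpha> - \<beta>) / 2))"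
      using 1 by (simp add: J_bound_def)
    show ?thesis unfolding J
    proof (rule ereal_bound3[OF pKpos])
      assume n1: "sin \<alpha> \<noteq> 0" and n2: "sin ((\<alpha> + \<beta>) / 2) \<noteq> 0" and n3: "sin ((\<alpha> - \<beta>) / 2) \<noteq> 0"
      have al: "\<alpha> < pi" using n1 api by (cases "\<alpha> = pi") auto
      have d: "step_g \<alpha> \<beta> \<theta> - g_partial \<alpha> \<beta> k \<theta> = (E (\<alpha>+\<alpha>) + E 0 - E (\<beta>+\<alpha>) - E (\<beta>-\<alpha>))/pi"
        using diff 1 al ba by simp
      have e1: "\<bar>E (\<alpha>+\<alpha>)\<bar> \<le> (1/\<bar>sin \<alpha>\<bar>)/K"
        using Eb[of "2*\<alpha>" "\<alpha>+\<alpha>"] n1 al ba b0 by simp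
      have e2: "\<bar>E 0\<bar> \<le> 0/K" using E0 by simp
      have e3: "\<bar>E (\<beta>+\<alpha>)\<bar> \<le> (1/\<bar>sin ((\<alpha> + \<beta>) / 2)\<bar>)/K"
        using Eb[of "\<alpha>+\<beta>" "\<beta>+\<alpha>"] n2 al ba b0 by (simp add: add.commute)
      have e4: "\<bar>E (\<beta>-\<alpha>)\<bar> \<le> (1/\<bar>sin ((\<alpha> - \<beta>) / 2)\<bar>)/K"
        using Eb[of "\<alpha>-\<beta>" "\<beta>-\<alpha>"] n3 al ba b0 by simp
      show "\<bar>step_g \<alpha> \<beta> \<theta> - g_partial \<alpha> \<beta> k \<theta>\<bar>
          \<le> (1 / \<bar>sin \<alpha>\<bar> + 1 / \<bar>sin ((\<alpha> + \<beta>) / 2)\<bar> + 1 / \<bar>sin ((\<alpha> - \<beta>) / 2)\<bar>) / (pi * (real k + 1))"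
        unfolding d pK using arith4[OF e1 e2 e3 e4 K] by simp
    qed
  next
    case 2
    have J: "J_bound \<alpha> \<beta> \<theta> = inv_abs (sin \<beta>) + inv_abs (sin ((\<alpha> + \<beta>) / 2)) + inv_abs (sin ((\<alpha> - \<beta>) / 2))"
      using 2 ba by (simp add: J_bound_def)
    show ?thesis unfolding J
    proof (rule ereal_bound3[OF pKpos])
      assume n1: "sin \<beta> \<noteq> 0" and n2: "sin ((\<alpha> + \<beta>) / 2) \<noteq> 0" and n3: "sin ((\<alpha> - \<beta>) / 2) \<noteq> 0"
      have bl: "0 < \<beta>" using n1 b0 by (cases "\<beta> = 0") auto
      have d: "step_g \<alpha> \<beta> \<theta> - g_partial \<alpha> \<beta> k \<theta> = (E (\<alpha>+\<beta>) + E (\<alpha>-\<beta>) - E (\<beta>+\<beta>) - E 0)/pi"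
        using diff 2 bl ba by simp
      have e1: "\<bar>E (\<alpha>+\<beta>)\<bar> \<le> (1/\<bar>sin ((\<alpha> + \<beta>) / 2)\<bar>)/K"
        using Eb[of "\<alpha>+\<beta>" "\<alpha>+\<beta>"] n2 api ba b0 by simp
      have e2: "\<bar>E (\<alpha>-\<beta>)\<bar> \<le> (1/\<bar>sin ((\<alpha> - \<beta>) / 2)\<bar>)/K"
        using Eb[of "\<alpha>-\<beta>" "\<alpha>-\<beta>"] n3 api ba b0 by simp
      have e3: "\<bar>E (\<beta>+\<beta>)\<bar> \<le> (1/\<bar>sin \<beta>\<bar>)/K"
        using Eb[of "2*\<beta>" "\<beta>+\<beta>"] n1 api ba b0 by simp
      have e4: "\<bar>E 0\<bar> \<le> 0/K" using E0 by simp
      show "\<bar>step_g \<alpha> \<beta> \<theta> - g_partial \<alpha> \<beta> k \<theta>\<bar>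
          \<le> (1 / \<bar>sin \<beta>\<bar> + 1 / \<bar>sin ((\<alpha> + \<beta>) / 2)\<bar> + 1 / \<bar>sin ((\<alpha> - \<beta>) / 2)\<bar>) / (pi * (real k + 1))"
        unfolding d pK using arith4[OF e1 e2 e3 e4 K] by (simp add: add_ac)
    qed
  next
    case 3
    have J: "J_bound \<alpha> \<beta> \<theta> = inv_abs (sin ((\<theta> + \<alpha>) / 2)) + inv_abs (sin ((\<theta> - \<alpha>) / 2))
        + inv_abs (sin ((\<theta> + \<beta>) / 2)) + inv_abs (sin ((\<theta> - \<beta>) / 2))"
      using 3 by (simp add: J_bound_def)
    show ?thesis unfolding J
    proof (rule ereal_bound4[OF pKpos])
      assume n1: "sin ((\<theta> + \<alpha>) / 2) \<noteq> 0" and n2: "sin ((\<theta> - \<alpha>) / 2) \<noteq> 0"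
        and n3: "sin ((\<theta> + \<beta>) / 2) \<noteq> 0" and n4: "sin ((\<theta> - \<beta>) / 2) \<noteq> 0"
      have d: "step_g \<alpha> \<beta> \<theta> - g_partial \<alpha> \<beta> k \<theta> = (E (\<alpha>+\<theta>) + E (\<alpha>-\<theta>) - E (\<beta>+\<theta>) - E (\<beta>-\<theta>))/pi"
        using diff 3 by simp
      have ta: "\<theta> + \<alpha> < 2*pi" using 3 api tpi by (cases "\<alpha> = pi") auto
      have e1: "\<bar>E (\<alpha>+\<theta>)\<bar> \<le> (1/\<bar>sin ((\<theta> + \<alpha>) / 2)\<bar>)/K"
        using Eb[of "\<theta>+\<alpha>" "\<alpha>+\<theta>"] n1 ta api ba b0 t0 by (simp add: add.commute)
      have e2: "\<bar>E (\<alpha>-\<theta>)\<bar> \<le> (1/\<bar>sin ((\<theta> - \<alpha>) / 2)\<bar>)/K"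
        using Eb[of "\<theta>-\<alpha>" "\<alpha>-\<theta>"] n2 api ba b0 t0 tpi by simp
      have e3: "\<bar>E (\<beta>+\<theta>)\<bar> \<le> (1/\<bar>sin ((\<theta> + \<beta>) / 2)\<bar>)/K"
        using Eb[of "\<theta>+\<beta>" "\<beta>+\<theta>"] n3 api ba b0 t0 tpi by (simp add: add.commute)
      have e4: "\<bar>E (\<beta>-\<theta>)\<bar> \<le> (1/\<bar>sin ((\<theta> - \<beta>) / 2)\<bar>)/K"
        using Eb[of "\<theta>-\<beta>" "\<beta>-\<theta>"] n4 api ba b0 t0 tpi by simp
      show "\<bar>step_g \<alpha> \<beta> \<theta> - g_partial \<alpha> \<beta> k \<theta>\<bar>
          \<le> (1 / \<bar>sin ((\<theta> + \<alpha>) / 2)\<bar> + 1 / \<bar>sin ((\<theta> - \<alpha>) / 2)\<bar> + 1 / \<bar>sin ((\<theta> + \<beta>) / 2)\<bar>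
              + 1 / \<bar>sin ((\<theta> - \<beta>) / 2)\<bar>) / (pi * (real k + 1))"
        unfolding d pK using arith4[OF e1 e2 e3 e4 K] by simp
    qed
  qed
  then show ?thesis unfolding \<alpha>_def \<beta>_def .
qed

end
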